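(* Let $(M,F)$ be a conic pseudo-Finsler surface and $\overline F=e^\phi F$ an anisotropic conformal change. Let $\mathcal J=S(\mathcal I)=F\mathcal I_{,1}$ and $\overline{\mathcal J}=\overline S(\overline{\mathcal I})$ be the Landsberg scalars of $F$ and $\overline F$. Then $$F\overline{\mathcal J}=F\sqrt{\varepsilon\rho}\,\mathcal J+\frac{\sqrt{\varepsilon\rho}}{2\rho}\Big[(F^2\rho_{,1}-2\varepsilon Q\rho_{;2})\Big(\mathcal I+2\varepsilon\phi_{;2}+\frac{\varepsilon\rho_{;2}}{2\rho}\Big)+F^2(4\varepsilon\rho\phi_{;2,1}-\varepsilon\rho_{;2,1})-2Q(2\varepsilon\rho\mathcal I_{;2}+4\rho\phi_{;2;2}-\rho_{;2;2})\Big].$$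
   Context: Throughout, $M$ is a smooth $2$-dimensional manifold, $TM_0$ its slit tangent bundle with induced local coordinates $(x^i,y^i)$, $\partial_i=\partial/\partial x^i$, $\dot\partial_i=\partial/\partial y^i$. A function is called $h(r)$ if it is positively homogeneous of degree $r$ in $y$. A conic pseudo-Finsler surface $(M,F)$ consists of a conic subbundle $\mathcal A\subset TM_0$ (an open set invariant under $y\mapsto\lambda y$, $\lambda>0$, projecting onto $M$) and a smooth $h(1)$ function $F:\mathcal A\to\mathbb R$ such that $g_{ij}=\frac12\dot\partial_i\dot\partial_jF^2$ is nondegenerate. Put $\ell_i=\dot\partial_iF$, $\ell^i=y^i/F$. Modified Berwald frame: $\varepsilon\in\{1,-1\}$ and a covector $m_i$ satisfy $g_{ij}=\ell_i\ell_j+\varepsilon m_im_j$, $m^i=g^{ij}m_j$, so $\ell^i\ell_i=1$, $\ell^im_i=0$, $m^im_i=\varepsilon$. The main scalar $\mathcal I$ ($h(0)$) is defined by $FC_{ijk}=\mathcal I\,m_im_jm_k$, where $C_{ijk}=\frac14\dot\partial_i\dot\partial_j\dot\partial_kF^2$. The geodesic spray of $F$ is $S=y^i\partial_i-2G^i\dot\partial_i$; $G^i_j=\dot\partial_jG^i$, $\delta_i=\partial_i-G^j_i\dot\partial_j$. For a smooth function $f$: $f_{;1}=y^i\dot\partial_if$, $f_{;2}=\varepsilon Fm^i\dot\partial_if$, $f_{,1}=\ell^i\delta_if$, $f_{,2}=\varepsilon m^i\delta_if$; iterated derivatives are read left to right, e.g. $f_{,1;2}=(f_{,1})_{;2}$,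 $f_{;2,1}=(f_{;2})_{,1}$. Anisotropic conformal change: $\phi$ is a smooth $h(0)$ function on $\mathcal A$ with $F^2(\dot\partial_i\dot\partial_j\phi+\dot\partial_i\phi\,\dot\partial_j\phi)m^im^j+\varepsilon\ne0$, and $\overline F=e^{\phi}F$. Set $\sigma=\phi_{;2;2}+\varepsilon\mathcal I\phi_{;2}+2(\phi_{;2})^2$, $\rho=1/(\sigma+\varepsilon-(\phi_{;2})^2)$ (with $\varepsilon\rho>0$), $2Q=\varepsilon\rho F^2(\phi_{;2}\phi_{,1}+\phi_{,1;2}-2\phi_{,2})$, $2P=-\rho F^2\phi_{;2}(\phi_{;2}\phi_{,1}+\phi_{,1;2}-2\phi_{,2})+F^2\phi_{,1}$. The spray coefficients of $\overline F$ are $\overline G^i=G^i+Qm^i+P\ell^i$, $\overline S=y^i\partial_i-2\overline G^i\dot\partial_i$, and the main scalar of $\overline F$ is $\overline{\mathcal I}=\sqrt{\varepsilon\rho}[\mathcal I+2\varepsilon\phi_{;2}-\frac\varepsilon2(\ln\rho)_{;2}]$. *)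

theory Defs
  imports "HOL-Analysis.Analysis"
begin

text \<open>Local coordinate model of the slit tangent bundle over a chart of the surface M:
 a point of TM is a pair (x, y) with x, y in R^2.  Functions on (subsets of) TM are
 functions pt => real.\<close>

type_synonym pt = "(real^2) \<times> (real^2)"

definition dX :: "2 \<Rightarrow> (pt \<Rightarrow> real) \<Rightarrow> pt \<Rightarrow> real" where
  "dX i f p = frechet_derivative f (at p) (axis i 1, 0)"

definition dY :: "2 \<Rightarrow> (pt \<Rightarrow> real) \<Rightarrow> pt \<Rightarrow> real" where
  "dY i f p = frechet_derivative f (at p) (0, axis i 1)"

fun iter_pd :: "(bool \<times> 2) list \<Rightarrow> (pt \<Rightarrow> real) \<Rightarrow> pt \<Rightarrow> real" where
  "iter_pd [] f = f"
| "iter_pd ((b, i) # ops) f = (if b then dY i else dX i) (iter_pd ops f)"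

definition smooth_on :: "pt set \<Rightarrow> (pt \<Rightarrow> real) \<Rightarrow> bool" where
  "smooth_on A f \<longleftrightarrow> (\<forall>ops. iter_pd ops f differentiable_on A)"

definition conic :: "pt set \<Rightarrow> bool" where
  "conic A \<longleftrightarrow> open A \<and> (\<forall>p\<in>A. snd p \<noteq> 0) \<and>
     (\<forall>p\<in>A. \<forall>c::real. c > 0 \<longrightarrow> (fst p, c *\<^sub>R snd p) \<in> A)"

definition homog :: "pt set \<Rightarrow> real \<Rightarrow> (pt \<Rightarrow> real) \<Rightarrow> bool" where
  "homog A r f \<longleftrightarrow> (\<forall>p\<in>A. \<forall>c::real. c > 0 \<longrightarrow> f (fst p, c *\<^sub>R snd p) = c powr r * f p)"

definition gmet :: "(pt \<Rightarrow> real) \<Rightarrow> 2 \<Rightarrow> 2 \<Rightarrow> pt \<Rightarrow> real" where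
  "gmet F i j p = 1/2 * dY i (dY j (\<lambda>q. (F q)\<^sup>2)) p"

definition gmat :: "(pt \<Rightarrow> real) \<Rightarrow> pt \<Rightarrow> real^2^2" where
  "gmat F p = (\<chi> i j. gmet F i j p)"

definition ginv :: "(pt \<Rightarrow> real) \<Rightarrow> 2 \<Rightarrow> 2 \<Rightarrow> pt \<Rightarrow> real" where
  "ginv F i j p = matrix_inv (gmat F p) $ i $ j"

definition cartan :: "(pt \<Rightarrow> real) \<Rightarrow> 2 \<Rightarrow> 2 \<Rightarrow> 2 \<Rightarrow> pt \<Rightarrow> real" where
  "cartan F i j k p = 1/4 * dY i (dY j (dY k (\<lambda>q. (F q)\<^sup>2))) p"

definition ell_up :: "(pt \<Rightarrow> real) \<Rightarrow> 2 \<Rightarrow> pt \<Rightarrow> real" where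
  "ell_up F i p = snd p $ i / F p"

definition m_up :: "(pt \<Rightarrow> real) \<Rightarrow> (2 \<Rightarrow> pt \<Rightarrow> real) \<Rightarrow> 2 \<Rightarrow> pt \<Rightarrow> real" where
  "m_up F m i p = (\<Sum>j\<in>UNIV. ginv F i j p * m j p)"

definition sprayG :: "(pt \<Rightarrow> real) \<Rightarrow> 2 \<Rightarrow> pt \<Rightarrow> real" where
  "sprayG F i p = 1/4 * (\<Sum>l\<in>UNIV. ginv F i l p *
      ((\<Sum>k\<in>UNIV. snd p $ k * dX k (dY l (\<lambda>q. (F q)\<^sup>2)) p) - dX l (\<lambda>q. (F q)\<^sup>2) p))"

definition Gij :: "(pt \<Rightarrow> real) \<Rightarrow> 2 \<Rightarrow> 2 \<Rightarrow> pt \<Rightarrow> real" where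
  "Gij F i j p = dY j (sprayG F i) p"

definition hdelta :: "(pt \<Rightarrow> real) \<Rightarrow> 2 \<Rightarrow> (pt \<Rightarrow> real) \<Rightarrow> pt \<Rightarrow> real" where
  "hdelta F i f p = dX i f p - (\<Sum>j\<in>UNIV. Gij F j i p * dY j f p)"

definition spray_with :: "(2 \<Rightarrow> pt \<Rightarrow> real) \<Rightarrow> (pt \<Rightarrow> real) \<Rightarrow> pt \<Rightarrow> real" where
  "spray_with G f p = (\<Sum>i\<in>UNIV. snd p $ i * dX i f p) - 2 * (\<Sum>i\<in>UNIV. G i p * dY i f p)"

definition spray_op :: "(pt \<Rightarrow> real) \<Rightarrow> (pt \<Rightarrow> real) \<Rightarrow> pt \<Rightarrow> real" where
  "spray_op F f = spray_with (sprayG F) f"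

text \<open>Berwald frame derivatives  f_{;1}, f_{;2}, f_{,1}, f_{,2}.\<close>
definition vd1 :: "(pt \<Rightarrow> real) \<Rightarrow> pt \<Rightarrow> real" where
  "vd1 f p = (\<Sum>i\<in>UNIV. snd p $ i * dY i f p)"

definition vd2 :: "(pt \<Rightarrow> real) \<Rightarrow> real \<Rightarrow> (2 \<Rightarrow> pt \<Rightarrow> real) \<Rightarrow> (pt \<Rightarrow> real) \<Rightarrow> pt \<Rightarrow> real" where
  "vd2 F eps m f p = eps * F p * (\<Sum>i\<in>UNIV. m_up F m i p * dY i f p)"

definition hd1 :: "(pt \<Rightarrow> real) \<Rightarrow> (pt \<Rightarrow> real) \<Rightarrow> pt \<Rightarrow> real" where
  "hd1 F f p = (\<Sum>i\<in>UNIV. ell_up F i p * hdelta F i f p)"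

definition hd2 :: "(pt \<Rightarrow> real) \<Rightarrow> real \<Rightarrow> (2 \<Rightarrow> pt \<Rightarrow> real) \<Rightarrow> (pt \<Rightarrow> real) \<Rightarrow> pt \<Rightarrow> real" where
  "hd2 F eps m f p = eps * (\<Sum>i\<in>UNIV. m_up F m i p * hdelta F i f p)"

definition berwald_frame :: "pt set \<Rightarrow> (pt \<Rightarrow> real) \<Rightarrow> real \<Rightarrow> (2 \<Rightarrow> pt \<Rightarrow> real) \<Rightarrow> bool" where
  "berwald_frame A F eps m \<longleftrightarrow> (eps = 1 \<or> eps = -1) \<and> (\<forall>i. smooth_on A (m i)) \<and>
     (\<forall>p\<in>A. \<forall>i j. gmet F i j p = dY i F p * dY j F p + eps * m i p * m j p)"

definition main_scalar :: "pt set \<Rightarrow> (pt \<Rightarrow> real) \<Rightarrow> (2 \<Rightarrow> pt \<Rightarrow> real) \<Rightarrow> (pt \<Rightarrow> real) \<Rightarrow> bool" where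
  "main_scalar A F m I \<longleftrightarrow>
     (\<forall>p\<in>A. \<forall>i j k. F p * cartan F i j k p = I p * m i p * m j p * m k p)"

definition conic_pseudo_finsler :: "pt set \<Rightarrow> (pt \<Rightarrow> real) \<Rightarrow> bool" where
  "conic_pseudo_finsler A F \<longleftrightarrow> conic A \<and> smooth_on A F \<and> homog A 1 F \<and>
     (\<forall>p\<in>A. F p \<noteq> 0) \<and> (\<forall>p\<in>A. det (gmat F p) \<noteq> 0)"

definition admissible_phi :: "pt set \<Rightarrow> (pt \<Rightarrow> real) \<Rightarrow> real \<Rightarrow> (2 \<Rightarrow> pt \<Rightarrow> real) \<Rightarrow> (pt \<Rightarrow> real) \<Rightarrow> bool" where
  "admissible_phi A F eps m phi \<longleftrightarrow> smooth_on A phi \<and> homog A 0 phi \<and>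
     (\<forall>p\<in>A. (F p)\<^sup>2 * (\<Sum>i\<in>UNIV. \<Sum>j\<in>UNIV. (dY i (dY j phi) p + dY i phi p * dY j phi p)
                 * m_up F m i p * m_up F m j p) + eps \<noteq> 0)"

definition sigmaC where
  "sigmaC F eps m I phi p = vd2 F eps m (vd2 F eps m phi) p + eps * I p * vd2 F eps m phi p
     + 2 * (vd2 F eps m phi p)\<^sup>2"

definition rhoC where
  "rhoC F eps m I phi p = 1 / (sigmaC F eps m I phi p + eps - (vd2 F eps m phi p)\<^sup>2)"

definition auxK where
  "auxK F eps m phi p = vd2 F eps m phi p * hd1 F phi p + vd2 F eps m (hd1 F phi) p
     - 2 * hd2 F eps m phi p"

definition QC where
  "QC F eps m I phi p = eps * rhoC F eps m I phi p * (F p)\<^sup>2 * auxK F eps m phi p / 2"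

definition PC where
  "PC F eps m I phi p = (- rhoC F eps m I phi p * (F p)\<^sup>2 * vd2 F eps m phi p * auxK F eps m phi p
     + (F p)\<^sup>2 * hd1 F phi p) / 2"

text \<open>Spray coefficients and main scalar of  bar F = e^phi F  (as given in the setup).\<close>
definition GbarC where
  "GbarC F eps m I phi i p = sprayG F i p + QC F eps m I phi p * m_up F m i p
     + PC F eps m I phi p * ell_up F i p"

definition IbarC where
  "IbarC F eps m I phi p = sqrt (eps * rhoC F eps m I phi p) *
     (I p + 2 * eps * vd2 F eps m phi p
      - eps / 2 * vd2 F eps m (\<lambda>q. ln \<bar>rhoC F eps m I phi q\<bar>) p)"

end

theory Submission
  imports Defs
begin

definition dd :: "pt \<Rightarrow> (pt \<Rightarrow> real) \<Rightarrow> pt \<Rightarrow> real" where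
  "dd v f p = frechet_derivative f (at p) v"

lemma dd_has: "(f has_derivative f') (at p) \<Longrightarrow> dd v f p = f' v"
  unfolding dd_def using frechet_derivative_at by metis

lemma dd_works: "f differentiable (at p) \<Longrightarrow> (f has_derivative (\<lambda>v. dd v f p)) (at p)"
  unfolding dd_def using frechet_derivative_works by metis

lemma dX_dd: "dX i f p = dd (axis i 1, 0) f p" by (simp add: dX_def dd_def)
lemma dY_dd: "dY i f p = dd (0, axis i 1) f p" by (simp add: dY_def dd_def)

lemma dd_local:
  assumes "open U" "p \<in> U" "\<And>q. q \<in> U \<Longrightarrow> f q = g q"
  shows "dd v f p = dd v g p"
proof -
  have "\<And>D. (f has_derivative D) (at p) \<longleftrightarrow> (g has_derivative D) (at p)"
    using has_derivative_transform_within_open[OF _ assms(1,2)] assms(3) by metis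
  hence "frechet_derivative f (at p) = frechet_derivative g (at p)"
    unfolding frechet_derivative_def by presburger
  thus ?thesis by (simp add: dd_def)
qed

lemma diff_local:
  fixes f g :: "pt \<Rightarrow> real"
  assumes "open U" "p \<in> U" "\<And>q. q \<in> U \<Longrightarrow> f q = g q" "f differentiable (at p)"
  shows "g differentiable (at p)"
  using assms has_derivative_transform_within_open unfolding differentiable_def by metis

lemma dd_add: "f differentiable (at p) \<Longrightarrow> g differentiable (at p) \<Longrightarrow>
   dd v (\<lambda>q. f q + g q) p = dd v f p + dd v g p"
  by (rule dd_has) (intro has_derivative_add dd_works)

lemma dd_diff: "f differentiable (at p) \<Longrightarrow> g differentiable (at p) \<Longrightarrow>
   dd v (\<lambda>q. f q - g q) p = dd v f p - dd v g p"
  by (rule dd_has) (intro has_derivative_diff dd_works)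

lemma dd_mult: "f differentiable (at p) \<Longrightarrow> g differentiable (at p) \<Longrightarrow>
   dd v (\<lambda>q. f q * g q) p = dd v f p * g p + f p * dd v g p"
  by (rule dd_has, rule has_derivative_eq_rhs, rule has_derivative_mult[OF dd_works dd_works]) auto

lemma dd_const: "dd v (\<lambda>q. c) p = 0"
  by (rule dd_has) auto

lemma dd_chain: "f differentiable (at p) \<Longrightarrow> (g has_real_derivative D) (at (f p)) \<Longrightarrow>
   dd v (\<lambda>q. g (f q)) p = D * dd v f p"
  by (rule dd_has, rule has_derivative_compose[OF dd_works has_field_derivative_imp_has_derivative])

lemma diff_chain: "(f::pt\<Rightarrow>real) differentiable (at p) \<Longrightarrow> (g has_real_derivative D) (at (f p)) \<Longrightarrow>
   (\<lambda>q. g (f q)) differentiable (at p)"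
proof -
  assume a: "f differentiable (at p)" "(g has_real_derivative D) (at (f p))"
  show ?thesis
    using has_derivative_compose[OF dd_works[OF a(1)] has_field_derivative_imp_has_derivative[OF a(2)]]
    unfolding differentiable_def by blast
qed

lemma dd_linear: "f differentiable (at p) \<Longrightarrow> dd (a *\<^sub>R v + b *\<^sub>R w) f p = a * dd v f p + b * dd w f p"
  unfolding dd_def using linear_frechet_derivative[of f "at p"]
  by (simp add: linear_add linear_scale)

lemma dd_addv: "f differentiable (at p) \<Longrightarrow> dd (v + w) f p = dd v f p + dd w f p"
  unfolding dd_def using linear_frechet_derivative[of f "at p"]
  by (simp add: linear_add)

lemma dd_scalev: "f differentiable (at p) \<Longrightarrow> dd (a *\<^sub>R v) f p = a * dd v f p"
  unfolding dd_def using linear_frechet_derivative[of f "at p"]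
  by (simp add: linear_scale)

lemma op_dd:
  assumes "f differentiable (at p)"
  shows "(\<Sum>i\<in>UNIV. a i * dX i f p) + (\<Sum>i\<in>UNIV. b i * dY i f p)
     = dd (\<chi> i. a i, \<chi> i. b i) f p"
proof -
  have v: "((\<chi> i. a i, \<chi> i. b i)::pt) = (a 1 *\<^sub>R (axis 1 1, 0) + a 2 *\<^sub>R (axis 2 1, 0))
      + (b 1 *\<^sub>R (0, axis 1 1) + b 2 *\<^sub>R (0, axis 2 1))"
    by (simp add: vec_eq_iff forall_2 axis_def)
  have "dd (\<chi> i. a i, \<chi> i. b i) f p = (a 1 * dX 1 f p + a 2 * dX 2 f p) + (b 1 * dY 1 f p + b 2 * dY 2 f p)"
    unfolding v dX_dd dY_dd dd_addv[OF assms] dd_scalev[OF assms] by simp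
  thus ?thesis by (simp add: sum_2)
qed

lemma iter_pd_append: "iter_pd (xs @ ys) f = iter_pd xs (iter_pd ys f)"
  by (induction xs) auto

definition Ck :: "pt set \<Rightarrow> nat \<Rightarrow> (pt \<Rightarrow> real) \<Rightarrow> bool" where
  "Ck U k f \<longleftrightarrow> (\<forall>ops. length ops \<le> k \<longrightarrow> iter_pd ops f differentiable_on U)"

lemma smooth_Ck: "smooth_on U f \<longleftrightarrow> (\<forall>k. Ck U k f)"
  unfolding smooth_on_def Ck_def by auto

lemma Ck_mono: "k \<le> k' \<Longrightarrow> Ck U k' f \<Longrightarrow> Ck U k f"
  unfolding Ck_def by auto

lemma Ck_0: "Ck U 0 f \<longleftrightarrow> f differentiable_on U"
  unfolding Ck_def by auto

lemma Ck_Suc: "Ck U (Suc k) f \<longleftrightarrow> f differentiable_on U \<and> (\<forall>i. Ck U k (dX i f) \<and> Ck U k (dY i f))"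
proof
  assume a: "Ck U (Suc k) f"
  have "Ck U k (dX i f)" for i
    unfolding Ck_def proof (intro allI impI)
    fix ops :: "(bool \<times> 2) list" assume "length ops \<le> k"
    thus "iter_pd ops (dX i f) differentiable_on U"
      using a[unfolded Ck_def, rule_format, of "ops @ [(False, i)]"] by (simp add: iter_pd_append)
  qed
  moreover have "Ck U k (dY i f)" for i
    unfolding Ck_def proof (intro allI impI)
    fix ops :: "(bool \<times> 2) list" assume "length ops \<le> k"
    thus "iter_pd ops (dY i f) differentiable_on U"
      using a[unfolded Ck_def, rule_format, of "ops @ [(True, i)]"] by (simp add: iter_pd_append)
  qed
  moreover have "f differentiable_on U" using a[unfolded Ck_def, rule_format, of "[]"] by simp
  ultimately show "f differentiable_on U \<and> (\<forall>i. Ck U k (dX i f) \<and> Ck U k (dY i f))" by blast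
next
  assume a: "f differentiable_on U \<and> (\<forall>i. Ck U k (dX i f) \<and> Ck U k (dY i f))"
  show "Ck U (Suc k) f" unfolding Ck_def
  proof (intro allI impI)
    fix ops :: "(bool \<times> 2) list" assume l: "length ops \<le> Suc k"
    show "iter_pd ops f differentiable_on U"
    proof (cases ops rule: rev_cases)
      case Nil thus ?thesis using a by simp
    next
      case (snoc ys y)
      obtain b i where y: "y = (b, i)" by fastforce
      have "length ys \<le> k" using l snoc by simp
      thus ?thesis using a snoc y unfolding Ck_def by (cases b) (auto simp: iter_pd_append)
    qed
  qed
qed

lemma diffon_at: assumes "open U" "f differentiable_on U" "q \<in> U" shows "f differentiable (at q)"
  using assms(2) unfolding differentiable_on_eq_differentiable_at[OF assms(1)] using assms(3) by blast

lemma diffon_cong: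
  fixes f g :: "pt \<Rightarrow> real"
  assumes "open U" "\<And>q. q \<in> U \<Longrightarrow> f q = g q" "f differentiable_on U"
  shows "g differentiable_on U"
  unfolding differentiable_on_eq_differentiable_at[OF assms(1)]
proof
  fix q assume q: "q \<in> U"
  show "g differentiable at q"
    by (rule diff_local[OF assms(1) q assms(2)]) (use assms q diffon_at in blast)+
qed

lemma dX_local: "open U \<Longrightarrow> q \<in> U \<Longrightarrow> (\<And>q. q \<in> U \<Longrightarrow> f q = g q) \<Longrightarrow> dX i f q = dX i g q"
  unfolding dX_dd by (rule dd_local)
lemma dY_local: "open U \<Longrightarrow> q \<in> U \<Longrightarrow> (\<And>q. q \<in> U \<Longrightarrow> f q = g q) \<Longrightarrow> dY i f q = dY i g q"
  unfolding dY_dd by (rule dd_local)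

lemma iter_local: assumes U: "open U" and eq: "\<And>q. q \<in> U \<Longrightarrow> f q = g q"
  shows "q \<in> U \<Longrightarrow> iter_pd ops f q = iter_pd ops g q"
proof (induction ops arbitrary: q)
  case Nil thus ?case using eq by simp
next
  case (Cons a ops)
  obtain b i where a: "a = (b, i)" by fastforce
  have X: "dX i (iter_pd ops f) q = dX i (iter_pd ops g) q"
    by (rule dX_local[OF U Cons.prems]) (rule Cons.IH)
  have Y: "dY i (iter_pd ops f) q = dY i (iter_pd ops g) q"
    by (rule dY_local[OF U Cons.prems]) (rule Cons.IH)
  show ?case using X Y a by simp
qed

lemma Ck_cong: assumes "open U" "\<And>q. q \<in> U \<Longrightarrow> f q = g q" "Ck U k f" shows "Ck U k g"
  unfolding Ck_def
proof (intro allI impI)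
  fix ops :: "(bool \<times> 2) list" assume "length ops \<le> k"
  hence "iter_pd ops f differentiable_on U" using assms(3) unfolding Ck_def by blast
  thus "iter_pd ops g differentiable_on U"
    by (rule diffon_cong[OF assms(1), rotated]) (rule iter_local[OF assms(1,2)])
qed

lemma Ck_const: "Ck U k (\<lambda>q. c)"
proof (induction k arbitrary: c)
  case 0 thus ?case by (simp add: Ck_0)
next
  case (Suc k)
  have "dX i (\<lambda>q. c) = (\<lambda>q. 0)" "dY i (\<lambda>q. c) = (\<lambda>q. 0)" for i
    by (auto simp: dX_dd dY_dd dd_const)
  thus ?case using Suc by (simp add: Ck_Suc)
qed

lemma dX_add: "f differentiable (at q) \<Longrightarrow> g differentiable (at q) \<Longrightarrow> dX i (\<lambda>q. f q + g q) q = dX i f q + dX i g q"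
  by (simp add: dX_dd dd_add)
lemma dY_add: "f differentiable (at q) \<Longrightarrow> g differentiable (at q) \<Longrightarrow> dY i (\<lambda>q. f q + g q) q = dY i f q + dY i g q"
  by (simp add: dY_dd dd_add)
lemma dX_mult: "f differentiable (at q) \<Longrightarrow> g differentiable (at q) \<Longrightarrow> dX i (\<lambda>q. f q * g q) q = dX i f q * g q + f q * dX i g q"
  by (simp add: dX_dd dd_mult)
lemma dY_mult: "f differentiable (at q) \<Longrightarrow> g differentiable (at q) \<Longrightarrow> dY i (\<lambda>q. f q * g q) q = dY i f q * g q + f q * dY i g q"
  by (simp add: dY_dd dd_mult)

lemma Ck_add: "open U \<Longrightarrow> Ck U k f \<Longrightarrow> Ck U k g \<Longrightarrow> Ck U k (\<lambda>q. f q + g q)"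
proof (induction k arbitrary: f g)
  case 0 thus ?case by (simp add: Ck_0 differentiable_on_add)
next
  case (Suc k)
  have df: "f differentiable (at q)" "g differentiable (at q)" if "q \<in> U" for q
    using Suc.prems(2,3)[THEN Ck_Suc[THEN iffD1], THEN conjunct1] that diffon_at[OF Suc.prems(1)] by blast+
  have d: "\<forall>i. Ck U k (dX i f) \<and> Ck U k (dY i f)" "\<forall>i. Ck U k (dX i g) \<and> Ck U k (dY i g)"
    using Suc.prems(2,3)[THEN Ck_Suc[THEN iffD1], THEN conjunct2] by auto
  have "Ck U k (dX i (\<lambda>q. f q + g q))" for i
  proof (rule Ck_cong[OF \<open>open U\<close>])
    show "Ck U k (\<lambda>q. dX i f q + dX i g q)" by (rule Suc.IH[OF Suc.prems(1)]) (use d in auto)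
    show "dX i f q + dX i g q = dX i (\<lambda>q. f q + g q) q" if "q \<in> U" for q using df[OF that] by (simp add: dX_add)
  qed
  moreover have "Ck U k (dY i (\<lambda>q. f q + g q))" for i
  proof (rule Ck_cong[OF \<open>open U\<close>])
    show "Ck U k (\<lambda>q. dY i f q + dY i g q)" by (rule Suc.IH[OF Suc.prems(1)]) (use d in auto)
    show "dY i f q + dY i g q = dY i (\<lambda>q. f q + g q) q" if "q \<in> U" for q using df[OF that] by (simp add: dY_add)
  qed
  moreover have "(\<lambda>q. f q + g q) differentiable_on U"
    using Suc.prems(2,3)[THEN Ck_Suc[THEN iffD1], THEN conjunct1] by (rule differentiable_on_add)
  ultimately show ?case by (intro Ck_Suc[THEN iffD2] conjI allI)
qed

lemma Ck_mult: "open U \<Longrightarrow> Ck U k f \<Longrightarrow> Ck U k g \<Longrightarrow> Ck U k (\<lambda>q. f q * g q)"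
proof (induction k arbitrary: f g)
  case 0 thus ?case by (simp add: Ck_0 differentiable_on_mult)
next
  case (Suc k)
  have df: "f differentiable (at q)" "g differentiable (at q)" if "q \<in> U" for q
    using Suc.prems(2,3)[THEN Ck_Suc[THEN iffD1], THEN conjunct1] that diffon_at[OF Suc.prems(1)] by blast+
  have d: "\<forall>i. Ck U k (dX i f) \<and> Ck U k (dY i f)" "\<forall>i. Ck U k (dX i g) \<and> Ck U k (dY i g)"
    using Suc.prems(2,3)[THEN Ck_Suc[THEN iffD1], THEN conjunct2] by auto
  have kf: "Ck U k f" "Ck U k g"
    using Ck_mono[OF le_SucI[OF order_refl] Suc.prems(2)] Ck_mono[OF le_SucI[OF order_refl] Suc.prems(3)] .
  have "Ck U k (dX i (\<lambda>q. f q * g q))" for i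
  proof (rule Ck_cong[OF \<open>open U\<close>])
    show "Ck U k (\<lambda>q. dX i f q * g q + f q * dX i g q)"
      by (rule Ck_add[OF Suc.prems(1)]; rule Suc.IH[OF Suc.prems(1)]) (use d kf in auto)
    show "dX i f q * g q + f q * dX i g q = dX i (\<lambda>q. f q * g q) q" if "q \<in> U" for q using df[OF that] by (simp add: dX_mult)
  qed
  moreover have "Ck U k (dY i (\<lambda>q. f q * g q))" for i
  proof (rule Ck_cong[OF \<open>open U\<close>])
    show "Ck U k (\<lambda>q. dY i f q * g q + f q * dY i g q)"
      by (rule Ck_add[OF Suc.prems(1)]; rule Suc.IH[OF Suc.prems(1)]) (use d kf in auto)
    show "dY i f q * g q + f q * dY i g q = dY i (\<lambda>q. f q * g q) q" if "q \<in> U" for q using df[OF that] by (simp add: dY_mult)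
  qed
  moreover have "(\<lambda>q. f q * g q) differentiable_on U"
    using Suc.prems(2,3)[THEN Ck_Suc[THEN iffD1], THEN conjunct1] by (rule differentiable_on_mult)
  ultimately show ?case by (intro Ck_Suc[THEN iffD2] conjI allI)
qed

lemma dd_inv: "f differentiable (at p) \<Longrightarrow> f p \<noteq> 0 \<Longrightarrow>
   dd v (\<lambda>q. 1 / f q) p = ((- 1) * dd v f p) * (1 / f p) * (1 / f p)"
  by (rule dd_has, rule has_derivative_eq_rhs, rule has_derivative_divide[OF has_derivative_const dd_works])
     (auto simp: field_simps)

lemma diff_inv: "(f::pt\<Rightarrow>real) differentiable (at p) \<Longrightarrow> f p \<noteq> 0 \<Longrightarrow> (\<lambda>q. 1 / f q) differentiable (at p)"
  using has_derivative_divide[OF has_derivative_const dd_works] unfolding differentiable_def by blast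

lemma Ck_inv: "open U \<Longrightarrow> (\<And>q. q \<in> U \<Longrightarrow> f q \<noteq> 0) \<Longrightarrow> Ck U k f \<Longrightarrow> Ck U k (\<lambda>q. 1 / f q)"
proof (induction k)
  case 0 thus ?case
    by (simp add: Ck_0 differentiable_on_eq_differentiable_at diff_inv)
next
  case (Suc k)
  have df: "f differentiable (at q)" if "q \<in> U" for q
    using Suc.prems(3)[THEN Ck_Suc[THEN iffD1], THEN conjunct1] that diffon_at[OF Suc.prems(1)] by blast+
  have d: "\<forall>i. Ck U k (dX i f) \<and> Ck U k (dY i f)"
    using Suc.prems(3)[THEN Ck_Suc[THEN iffD1], THEN conjunct2] by auto
  have kf: "Ck U k f"
    using Ck_mono[OF le_SucI[OF order_refl] Suc.prems(3)] .
  have IH: "Ck U k (\<lambda>q. 1 / f q)" using Suc.IH[OF Suc.prems(1,2) kf] .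
  have "Ck U k (dX i (\<lambda>q. 1 / f q))" for i
  proof (rule Ck_cong[OF \<open>open U\<close>])
    show "Ck U k (\<lambda>q. ((- 1) * dX i f q) * (1 / f q) * (1 / f q))"
      by (intro Ck_mult[OF Suc.prems(1)] Ck_const IH) (use d in auto)
    show "((- 1) * dX i f q) * (1 / f q) * (1 / f q) = dX i (\<lambda>q. 1 / f q) q" if "q \<in> U" for q
      unfolding dX_dd by (rule dd_inv[symmetric, OF df[OF that] Suc.prems(2)[OF that]])
  qed
  moreover have "Ck U k (dY i (\<lambda>q. 1 / f q))" for i
  proof (rule Ck_cong[OF \<open>open U\<close>])
    show "Ck U k (\<lambda>q. ((- 1) * dY i f q) * (1 / f q) * (1 / f q))"
      by (intro Ck_mult[OF Suc.prems(1)] Ck_const IH) (use d in auto)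
    show "((- 1) * dY i f q) * (1 / f q) * (1 / f q) = dY i (\<lambda>q. 1 / f q) q" if "q \<in> U" for q
      unfolding dY_dd by (rule dd_inv[symmetric, OF df[OF that] Suc.prems(2)[OF that]])
  qed
  moreover have "(\<lambda>q. 1 / f q) differentiable_on U"
    using Suc.prems(1,2) df by (simp add: differentiable_on_eq_differentiable_at diff_inv)
  ultimately show ?case by (intro Ck_Suc[THEN iffD2] conjI allI)
qed

lemma sm_Ck: "smooth_on U f \<longleftrightarrow> (\<forall>k. Ck U k f)" by (rule smooth_Ck)

lemma sm_const: "smooth_on U (\<lambda>q. c)" unfolding sm_Ck by (rule allI, rule Ck_const)
lemma sm_add: assumes "open U" "smooth_on U f" "smooth_on U g" shows "smooth_on U (\<lambda>q. f q + g q)"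
  unfolding sm_Ck by (rule allI, rule Ck_add[OF assms(1)]) (use assms(2,3) in \<open>simp_all add: sm_Ck\<close>)
lemma sm_mult: assumes "open U" "smooth_on U f" "smooth_on U g" shows "smooth_on U (\<lambda>q. f q * g q)"
  unfolding sm_Ck by (rule allI, rule Ck_mult[OF assms(1)]) (use assms(2,3) in \<open>simp_all add: sm_Ck\<close>)
lemma sm_inv: assumes "open U" "\<And>q. q \<in> U \<Longrightarrow> f q \<noteq> 0" "smooth_on U f" shows "smooth_on U (\<lambda>q. 1 / f q)"
  unfolding sm_Ck by (rule allI, rule Ck_inv[OF assms(1,2)]) (use assms(3) in \<open>simp_all add: sm_Ck\<close>)
lemma sm_cong: assumes "open U" "\<And>q. q \<in> U \<Longrightarrow> f q = g q" "smooth_on U f" shows "smooth_on U g"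
  unfolding sm_Ck by (rule allI, rule Ck_cong[OF assms(1,2)]) (use assms(3) in \<open>simp_all add: sm_Ck\<close>)
lemma sm_dX: assumes "smooth_on U f" shows "smooth_on U (dX i f)"
  unfolding sm_Ck proof
  fix k show "Ck U k (dX i f)" using assms[unfolded sm_Ck, rule_format, of "Suc k", unfolded Ck_Suc] by blast
qed
lemma sm_dY: assumes "smooth_on U f" shows "smooth_on U (dY i f)"
  unfolding sm_Ck proof
  fix k show "Ck U k (dY i f)" using assms[unfolded sm_Ck, rule_format, of "Suc k", unfolded Ck_Suc] by blast
qed
lemma sm_diffat: assumes "open U" "smooth_on U f" "q \<in> U" shows "f differentiable (at q)"
  by (rule diffon_at[OF assms(1) _ assms(3)]) (use assms(2)[unfolded sm_Ck, rule_format, of 0] in \<open>simp add: Ck_0\<close>)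
lemma sm_cmult: "open U \<Longrightarrow> smooth_on U f \<Longrightarrow> smooth_on U (\<lambda>q. c * f q)"
  by (rule sm_mult[OF _ sm_const])
lemma sm_diff: "open U \<Longrightarrow> smooth_on U f \<Longrightarrow> smooth_on U g \<Longrightarrow> smooth_on U (\<lambda>q. f q - g q)"
proof -
  assume a: "open U" "smooth_on U f" "smooth_on U g"
  have "smooth_on U (\<lambda>q. f q + (-1) * g q)" by (rule sm_add[OF a(1,2) sm_cmult[OF a(1,3)]])
  thus ?thesis by simp
qed
lemma sm_divide: "open U \<Longrightarrow> (\<And>q. q \<in> U \<Longrightarrow> g q \<noteq> 0) \<Longrightarrow> smooth_on U f \<Longrightarrow> smooth_on U g \<Longrightarrow> smooth_on U (\<lambda>q. f q / g q)"
proof -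
  assume a: "open U" "\<And>q. q \<in> U \<Longrightarrow> g q \<noteq> 0" "smooth_on U f" "smooth_on U g"
  have "smooth_on U (\<lambda>q. f q * (1 / g q))" by (rule sm_mult[OF a(1,3) sm_inv[OF a(1,2,4)]])
  thus ?thesis by simp
qed
lemma sm_sum2: fixes f :: "2 \<Rightarrow> pt \<Rightarrow> real" shows "open U \<Longrightarrow> (\<And>i. smooth_on U (f i)) \<Longrightarrow> smooth_on U (\<lambda>q. \<Sum>i\<in>UNIV. f i q)"
  unfolding sum_2 by (rule sm_add)
lemma sm_subset: "V \<subseteq> U \<Longrightarrow> smooth_on U f \<Longrightarrow> smooth_on V f"
  unfolding smooth_on_def by (blast intro: differentiable_on_subset)

lemma hd_snd: "((\<lambda>q::pt. snd q $ i) has_derivative (\<lambda>v. snd v $ i)) (at p)"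
  by (rule bounded_linear_imp_has_derivative, rule bounded_linear_compose[OF bounded_linear_vec_nth bounded_linear_snd])

lemma sm_snd: "smooth_on U (\<lambda>q::pt. snd q $ i)"
  unfolding sm_Ck
proof
  fix k show "Ck U k (\<lambda>q::pt. snd q $ i)"
  proof (induction k)
    case 0 show ?case unfolding Ck_0 differentiable_on_def differentiable_def
      using hd_snd has_derivative_at_withinI by blast
  next
    case (Suc k)
    have "dX j (\<lambda>q::pt. snd q $ i) = (\<lambda>q. 0)" for j
      unfolding dX_dd by (rule ext, subst dd_has[OF hd_snd]) simp
    moreover have "dY j (\<lambda>q::pt. snd q $ i) = (\<lambda>q. axis j 1 $ i)" for j
      unfolding dY_dd by (rule ext, subst dd_has[OF hd_snd]) simp
    moreover have "(\<lambda>q::pt. snd q $ i) differentiable_on U"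
      unfolding differentiable_on_def differentiable_def
      using hd_snd has_derivative_at_withinI by blast
    ultimately show ?case unfolding Ck_Suc by (simp add: Ck_const)
  qed
qed

lemma homD: "homog U r f \<Longrightarrow> p \<in> U \<Longrightarrow> c > 0 \<Longrightarrow> f (fst p, c *\<^sub>R snd p) = c powr r * f p"
  unfolding homog_def by blast
lemma homI: "(\<And>p c. p \<in> U \<Longrightarrow> (c::real) > 0 \<Longrightarrow> f (fst p, c *\<^sub>R snd p) = c powr r * f p) \<Longrightarrow> homog U r f"
  unfolding homog_def by blast

lemma hom_mult: "homog U r f \<Longrightarrow> homog U s g \<Longrightarrow> homog U (r + s) (\<lambda>q. f q * g q)"
  by (rule homI) (simp only: homD powr_add mult_ac)
lemma hom_add: "homog U r f \<Longrightarrow> homog U r g \<Longrightarrow> homog U r (\<lambda>q. f q + g q)"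
  by (rule homI) (simp only: homD distrib_left)
lemma hom_diff: "homog U r f \<Longrightarrow> homog U r g \<Longrightarrow> homog U r (\<lambda>q. f q - g q)"
  by (rule homI) (simp only: homD right_diff_distrib)
lemma hom_const: "homog U 0 (\<lambda>q. c)"
  by (rule homI) simp
lemma hom_cmult: "homog U r f \<Longrightarrow> homog U r (\<lambda>q. c * f q)"
  by (rule homI) (simp only: homD mult_ac)
lemma hom_inv: "homog U r f \<Longrightarrow> homog U (- r) (\<lambda>q. 1 / f q)"
  by (rule homI) (simp add: homD powr_minus_divide)
lemma hom_divide: "homog U r f \<Longrightarrow> homog U s g \<Longrightarrow> homog U (r - s) (\<lambda>q. f q / g q)"
  by (rule homI) (simp only: homD powr_diff times_divide_times_eq)
lemma hom_snd: "homog U 1 (\<lambda>q. snd q $ i)"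
  by (rule homI) simp
lemma hom_sum2: fixes f :: "2 \<Rightarrow> pt \<Rightarrow> real" shows "(\<And>i. homog U r (f i)) \<Longrightarrow> homog U r (\<lambda>q. \<Sum>i\<in>UNIV. f i q)"
  unfolding sum_2 by (rule hom_add)
lemma hom_eq: "homog U r f \<Longrightarrow> r = s \<Longrightarrow> homog U s f" by (rule subst)
lemma hom_cong: assumes "homog U r f" "conic U" "\<And>q. q \<in> U \<Longrightarrow> f q = g q" shows "homog U r g"
proof (rule homI)
  fix p c assume p: "p \<in> U" and c: "(c::real) > 0"
  have "(fst p, c *\<^sub>R snd p) \<in> U" using assms(2) p c unfolding conic_def by blast
  thus "g (fst p, c *\<^sub>R snd p) = c powr r * g p"
    using assms(3)[OF p] assms(3) homD[OF assms(1) p c] by metis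
qed
lemma hom_subset: "V \<subseteq> U \<Longrightarrow> homog U r f \<Longrightarrow> homog V r f"
  unfolding homog_def by blast

lemma hom_deriv:
  assumes U: "conic U" and h: "homog U r f" and sm: "f differentiable_on U"
  shows "homog U r (dX i f) \<and> homog U (r - 1) (dY i f)"
proof -
  have oU: "open U" using U unfolding conic_def by blast
  have main: "dd (fst v, c *\<^sub>R snd v) f (fst q, c *\<^sub>R snd q) = c powr r * dd v f q"
    if q: "q \<in> U" and c: "c > 0" for q c v
  proof -
    define T where "T = (\<lambda>q'::pt. (fst q', c *\<^sub>R snd q'))"
    have TU: "T q \<in> U" using U q c unfolding conic_def T_def by blast
    have Tlin: "(T has_derivative T) (at q)" unfolding T_def by (auto intro!: derivative_eq_intros)
    have fd: "f differentiable (at (T q))" using diffon_at[OF oU sm TU] .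
    have fdq: "f differentiable (at q)" using diffon_at[OF oU sm q] .
    have h1: "((\<lambda>q'. f (T q')) has_derivative (\<lambda>v. dd (T v) f (T q))) (at q)"
      using has_derivative_compose[OF Tlin dd_works[OF fd]] .
    have h1': "((\<lambda>q'. c powr r * f q') has_derivative (\<lambda>v. dd (T v) f (T q))) (at q)"
      by (rule has_derivative_transform_within_open[OF h1 oU q])
         (use h c in \<open>auto simp: homog_def T_def\<close>)
    have h2: "((\<lambda>q'. c powr r * f q') has_derivative (\<lambda>v. c powr r * dd v f q)) (at q)"
      using has_derivative_mult_right[OF dd_works[OF fdq]] .
    have "(\<lambda>v. dd (T v) f (T q)) = (\<lambda>v. c powr r * dd v f q)"
      using has_derivative_unique[OF h1' h2] .
    thus ?thesis unfolding T_def by metis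
  qed
  show ?thesis unfolding homog_def
  proof (intro conjI ballI allI impI)
    fix q c assume q: "q \<in> U" and c: "(c::real) > 0"
    show "dX i f (fst q, c *\<^sub>R snd q) = c powr r * dX i f q"
      using main[OF q c, of "(axis i 1, 0)"] by (simp add: dX_dd)
    have fd: "f differentiable (at (fst q, c *\<^sub>R snd q))"
      using diffon_at[OF oU sm] U q c unfolding conic_def by blast
    have "c * dY i f (fst q, c *\<^sub>R snd q) = c powr r * dY i f q"
      using main[OF q c, of "(0, axis i 1)"] dd_scalev[OF fd, of c "(0, axis i 1)"]
      by (simp add: dY_dd)
    thus "dY i f (fst q, c *\<^sub>R snd q) = c powr (r - 1) * dY i f q"
      using c by (simp add: powr_diff field_simps)
  qed
qed

lemma vd1_dd: "f differentiable (at q) \<Longrightarrow> vd1 f q = dd (0, snd q) f q"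
proof -
  assume fd: "f differentiable (at q)"
  have "vd1 f q = (\<Sum>i\<in>UNIV. 0 * dX i f q) + (\<Sum>i\<in>UNIV. snd q $ i * dY i f q)"
    by (simp add: vd1_def)
  also have "\<dots> = dd (\<chi> i. 0, \<chi> i. snd q $ i) f q" by (rule op_dd[OF fd])
  also have "(\<chi> i. 0, \<chi> i. snd q $ i) = ((0, snd q)::pt)" by (simp add: vec_eq_iff)
  finally show ?thesis .
qed

lemma euler:
  assumes U: "conic U" and h: "homog U r f" and q: "q \<in> U" and fd: "f differentiable (at q)"
  shows "vd1 f q = r * f q"
proof -
  define H where "H = (\<lambda>t::real. ((fst q, t *\<^sub>R snd q)::pt))"
  have H1: "H 1 = q" unfolding H_def by simp
  have Hd: "(H has_derivative (\<lambda>t. (0, t *\<^sub>R snd q))) (at 1)" unfolding H_def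
    by (auto intro!: derivative_eq_intros)
  have g1: "((\<lambda>t. f (H t)) has_derivative (\<lambda>t. dd (0, t *\<^sub>R snd q) f q)) (at 1)"
    using has_derivative_compose[OF Hd dd_works[OF fd[folded H1]]] unfolding H1 .
  have g1': "((\<lambda>t. t powr r * f q) has_derivative (\<lambda>t. dd (0, t *\<^sub>R snd q) f q)) (at 1)"
    by (rule has_derivative_transform_within_open[OF g1, of "{0<..}"])
       (use h q in \<open>auto simp: homog_def H_def\<close>)
  have p: "((\<lambda>t. t powr r) has_real_derivative r * 1 powr (r - 1)) (at 1)"
    by (rule has_real_derivative_powr) simp
  have g2: "((\<lambda>t. t powr r * f q) has_derivative (\<lambda>t. t * (r * f q))) (at 1)"
    using has_derivative_mult_left[OF has_field_derivative_imp_has_derivative[OF p], of "f q"]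
    by (simp add: mult_ac)
  have "(\<lambda>t. dd (0, t *\<^sub>R snd q) f q) = (\<lambda>t. t * (r * f q))"
    using has_derivative_unique[OF g1' g2] .
  hence "dd (0, snd q) f q = r * f q" by (metis mult_1 scaleR_one)
  thus ?thesis using vd1_dd[OF fd] by simp
qed

lemma det_sq_aux:
  fixes a b c e :: real assumes "a*e - b*c \<noteq> 0"
  shows "a*(a*(e*e)) + b*(b*(c*c)) \<noteq> 2*(a*(b*(c*e)))"
proof
  assume h: "a*(a*(e*e)) + b*(b*(c*c)) = 2*(a*(b*(c*e)))"
  have "(a*e - b*c)^2 = a*(a*(e*e)) + b*(b*(c*c)) - 2*(a*(b*(c*e)))"
    by (simp add: power2_eq_square algebra_simps)
  with h assms show False by simp
qed

lemma inv2:
  fixes M :: "real^2^2"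
  assumes d: "det M \<noteq> 0"
  shows "matrix_inv M $ i $ j = (if i = j then M $ (if i = 1 then 2 else 1) $ (if i = 1 then 2 else 1) else - M $ i $ j) / det M"
proof -
  define N :: "real^2^2" where "N = (\<chi> i j. (if i = j then M $ (if i = 1 then 2 else 1) $ (if i = 1 then 2 else 1) else - M $ i $ j) / det M)"
  have d2: "M$1$1 * M$2$2 - M$1$2 * M$2$1 \<noteq> 0" using d by (simp add: det_2)
  have MN: "M ** N = mat 1" "N ** M = mat 1"
    unfolding N_def using d2 det_sq_aux[OF d2]
    by (simp_all add: matrix_matrix_mult_def mat_def vec_eq_iff forall_2 sum_2 det_2 field_simps)
  have ex: "\<exists>A'. M ** A' = mat 1 \<and> A' ** M = mat 1" using MN by blast
  have "M ** matrix_inv M = mat 1 \<and> matrix_inv M ** M = mat 1"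
    unfolding matrix_inv_def by (rule someI_ex[OF ex])
  hence "matrix_inv M = N"
    by (metis MN(1) matrix_mul_assoc matrix_mul_lid matrix_mul_rid)
  thus ?thesis unfolding N_def by simp
qed

lemma deriv_ln_abs: "(x::real) \<noteq> 0 \<Longrightarrow> ((\<lambda>x. ln \<bar>x\<bar>) has_real_derivative 1 / x) (at x)"
proof (cases "x > 0")
  case True
  show ?thesis
    by (rule has_field_derivative_transform_within_open[OF DERIV_ln_divide[OF True], of "{0<..}"])
       (use True in auto)
next
  case False
  assume "x \<noteq> 0"
  with False have n: "x < 0" by simp
  have "((\<lambda>x. ln (- x)) has_real_derivative (1 / (- x)) * (- 1)) (at x)"
    by (rule DERIV_chain2[OF DERIV_ln_divide]) (use n in \<open>auto intro!: derivative_eq_intros\<close>)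
  hence "((\<lambda>x. ln (- x)) has_real_derivative 1 / x) (at x)" by simp
  thus ?thesis
    by (rule has_field_derivative_transform_within_open[of _ _ _ "{..<0}"]) (use n in auto)
qed

locale fsu =
  fixes A :: "pt set" and F phi I :: "pt \<Rightarrow> real" and eps :: real and m :: "2 \<Rightarrow> pt \<Rightarrow> real"
  assumes cpf: "conic_pseudo_finsler A F"
    and bf: "berwald_frame A F eps m"
    and ms: "main_scalar A F m I"
    and adm: "admissible_phi A F eps m phi"
    and pos: "\<forall>p\<in>A. eps * rhoC F eps m I phi p > 0"
begin

lemma conicA: "conic A" using cpf unfolding conic_pseudo_finsler_def by blast
lemma openA: "open A" using conicA unfolding conic_def by blast
lemma smF: "smooth_on A F" using cpf unfolding conic_pseudo_finsler_def by blast
lemma homF: "homog A 1 F" using cpf unfolding conic_pseudo_finsler_def by blast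
lemma Fnz: "q \<in> A \<Longrightarrow> F q \<noteq> 0" using cpf unfolding conic_pseudo_finsler_def by blast
lemma detnz: "q \<in> A \<Longrightarrow> det (gmat F q) \<noteq> 0" using cpf unfolding conic_pseudo_finsler_def by blast
lemma eps1: "eps = 1 \<or> eps = -1" using bf unfolding berwald_frame_def by blast
lemma epsq: "eps * eps = 1" using eps1 by auto
lemma smm: "smooth_on A (m i)" using bf unfolding berwald_frame_def by blast
lemma gm: "q \<in> A \<Longrightarrow> gmet F i j q = dY i F q * dY j F q + eps * m i q * m j q"
  using bf unfolding berwald_frame_def by blast
lemma smphi: "smooth_on A phi" using adm unfolding admissible_phi_def by blast
lemma homphi: "homog A 0 phi" using adm unfolding admissible_phi_def by blast

lemma diffonA: "smooth_on A f \<Longrightarrow> f differentiable_on A"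
  unfolding smooth_on_def by (metis iter_pd.simps(1))

lemma hdX: "homog A r f \<Longrightarrow> smooth_on A f \<Longrightarrow> homog A r (dX i f)"
  using hom_deriv[OF conicA] diffonA by blast
lemma hdY: "homog A r f \<Longrightarrow> smooth_on A f \<Longrightarrow> homog A (r - 1) (dY i f)"
  using hom_deriv[OF conicA] diffonA by blast

definition F2 where "F2 = (\<lambda>q. (F q)\<^sup>2)"
lemma smF2: "smooth_on A F2"
proof -
  have "smooth_on A (\<lambda>q. F q * F q)" by (rule sm_mult[OF openA smF smF])
  thus ?thesis unfolding F2_def by (simp add: power2_eq_square)
qed
lemma homF2: "homog A 2 F2"
proof -
  have "homog A (1 + 1) (\<lambda>q. F q * F q)" by (rule hom_mult[OF homF homF])
  thus ?thesis unfolding F2_def by (simp add: power2_eq_square)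
qed

lemma gmet_eq: "gmet F i j = (\<lambda>p. 1/2 * dY i (dY j F2) p)"
  unfolding gmet_def F2_def by simp
lemma smg: "smooth_on A (gmet F i j)"
  unfolding gmet_eq by (intro sm_cmult[OF openA] sm_dY smF2)
lemma homg: "homog A 0 (gmet F i j)"
proof -
  have "homog A (2 - 1 - 1) (dY i (dY j F2))" by (intro hdY smF2 homF2 sm_dY)
  thus ?thesis unfolding gmet_eq by (intro hom_cmult) simp
qed

definition detg where "detg q = gmet F 1 1 q * gmet F 2 2 q - gmet F 1 2 q * gmet F 2 1 q"
lemma detg_eq: "det (gmat F q) = detg q" unfolding detg_def gmat_def by (simp add: det_2)
lemma smdet: "smooth_on A detg"
  unfolding detg_def by (intro sm_diff[OF openA] sm_mult[OF openA] smg)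

lemma gmat_nth: "gmat F q $ a $ b = gmet F a b q" by (simp add: gmat_def)
lemma ginv_eq: "q \<in> A \<Longrightarrow> ginv F i j q = (if i = j then gmet F (if i = 1 then 2 else 1) (if i = 1 then 2 else 1) q else - gmet F i j q) / detg q"
  unfolding ginv_def by (simp only: inv2[OF detnz] detg_eq gmat_nth)

lemma smginv: "smooth_on A (ginv F i j)"
proof (cases "i = j")
  case True
  have "smooth_on A (\<lambda>q. gmet F (if i = 1 then 2 else 1) (if i = 1 then 2 else 1) q / detg q)"
    by (intro sm_divide[OF openA] smg smdet) (use detnz detg_eq in auto)
  thus ?thesis by (rule sm_cong[OF openA, rotated]) (simp add: ginv_eq True)
next
  case False
  have "smooth_on A (\<lambda>q. (- 1) * gmet F i j q / detg q)"
    by (intro sm_divide[OF openA] sm_cmult[OF openA] smg smdet) (use detnz detg_eq in auto)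
  thus ?thesis by (rule sm_cong[OF openA, rotated]) (simp add: ginv_eq False)
qed

lemma homginv: "homog A 0 (ginv F i j)"
proof (rule homI)
  fix q c assume q: "q \<in> A" and c: "(c::real) > 0"
  have "gmat F (fst q, c *\<^sub>R snd q) = gmat F q"
    unfolding gmat_def using homD[OF homg q c] c by (simp add: vec_eq_iff)
  thus "ginv F i j (fst q, c *\<^sub>R snd q) = c powr 0 * ginv F i j q"
    using c by (simp add: ginv_def)
qed

lemma homdF: "homog A 0 (dY i F)" using hdY[OF homF smF] by simp

lemma m_nonzero: assumes q: "q \<in> A" shows "\<exists>k. m k q \<noteq> 0"
proof (rule ccontr)
  assume "\<not> ?thesis"
  hence z: "m k q = 0" for k by blast
  have "detg q = 0" unfolding detg_def using gm[OF q] z by simp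
  thus False using detnz[OF q] detg_eq by simp
qed

lemma contm: "continuous_on A (m i)"
  using diffonA[OF smm] differentiable_imp_continuous_on by blast

lemma homm: "homog A 0 (m j)"
proof (rule homI)
  fix q c assume q: "q \<in> A" and c: "(c::real) > 0"
  define T where "T = (\<lambda>t::real. ((fst q, t *\<^sub>R snd q)::pt))"
  have TA: "t > 0 \<Longrightarrow> T t \<in> A" for t using conicA q unfolding conic_def T_def by blast
  have prod: "m i (T t) * m j (T t) = m i q * m j q" if t: "t > 0" for i j t
  proof -
    have "gmet F i j (T t) = gmet F i j q" using homD[OF homg q t] t by (simp add: T_def)
    moreover have "dY i F (T t) = dY i F q" "dY j F (T t) = dY j F q"
      using homD[OF homdF q t] t by (simp_all add: T_def)
    ultimately have "eps * m i (T t) * m j (T t) = eps * m i q * m j q"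
      using gm[OF TA[OF t]] gm[OF q] by simp
    thus ?thesis using eps1 by auto
  qed
  obtain k where k: "m k q \<noteq> 0" using m_nonzero[OF q] by blast
  define s where "s = (\<lambda>t. m k (T t) / m k q)"
  have s2: "t > 0 \<Longrightarrow> s t * s t = 1" for t unfolding s_def using prod[of t k k] k by (simp add: field_simps)
  have cs: "continuous_on {a..b} s" if "a > 0" for a b
  proof -
    have "continuous_on {a..b} T" unfolding T_def by (intro continuous_intros)
    moreover have "T ` {a..b} \<subseteq> A" using TA that by auto
    ultimately have "continuous_on {a..b} (\<lambda>t. m k (T t))"
      using continuous_on_compose2[OF contm] by blast
    thus ?thesis unfolding s_def by (intro continuous_intros) (use k in auto)
  qed
  have s1: "s 1 = 1" unfolding s_def T_def using k by simp
  have sc: "s c = 1"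
  proof (rule ccontr)
    assume "s c \<noteq> 1"
    hence sm1: "s c = -1" using s2[OF c] by (metis mult_cancel_right1 square_eq_1_iff)
    obtain x where x: "min c 1 \<le> x" "x \<le> max c 1" "s x = 0"
    proof (cases "c \<le> 1")
      case True
      show ?thesis using IVT'[of s c 0 1] sm1 s1 True cs[of c 1] c that by auto
    next
      case False
      show ?thesis using IVT2'[of s c 0 1] sm1 s1 False cs[of 1 c] that by auto
    qed
    have "x > 0" using x c by linarith
    thus False using s2[of x] x by simp
  qed
  hence mk: "m k (T c) = m k q" unfolding s_def using k by simp
  have "m j (T c) * m k q = m j q * m k q" using prod[OF c, of j k] mk by simp
  thus "m j (fst q, c *\<^sub>R snd q) = c powr 0 * m j q" using k c by (simp add: T_def)
qed

lemma mup_eq: "m_up F m i = (\<lambda>p. \<Sum>j\<in>UNIV. ginv F i j p * m j p)"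
  unfolding m_up_def by simp
lemma smmup: "smooth_on A (m_up F m i)"
  unfolding mup_eq by (intro sm_sum2[OF openA] sm_mult[OF openA] smginv smm)
lemma hommup: "homog A 0 (m_up F m i)"
  unfolding mup_eq by (intro hom_sum2 hom_eq[OF hom_mult[OF homginv homm]]) simp

lemma vd2_eq: "vd2 F eps m f = (\<lambda>p. eps * F p * (\<Sum>i\<in>UNIV. m_up F m i p * dY i f p))"
  unfolding vd2_def by simp

end

context fsu begin

lemma sprayG_eq: "sprayG F i = (\<lambda>p. 1/4 * (\<Sum>l\<in>UNIV. ginv F i l p *
      ((\<Sum>k\<in>UNIV. snd p $ k * dX k (dY l F2) p) - dX l F2 p)))"
  unfolding sprayG_def F2_def by simp

lemma smG: "smooth_on A (sprayG F i)"
  unfolding sprayG_eq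
  by (intro sm_cmult[OF openA] sm_sum2[OF openA] sm_mult[OF openA] sm_diff[OF openA]
        smginv sm_snd sm_dX sm_dY smF2)

lemma homG: "homog A 2 (sprayG F i)"
proof -
  have h1: "homog A 1 (dX k (dY l F2))" for k l
    using hdX[OF hom_eq[OF hdY[OF homF2 smF2]] sm_dY[OF smF2]] by simp
  have h2: "homog A 2 (\<lambda>p. snd p $ k * dX k (dY l F2) p)" for k l
    using hom_mult[OF hom_snd h1] by simp
  have h3: "homog A 2 (\<lambda>p. (\<Sum>k\<in>UNIV. snd p $ k * dX k (dY l F2) p) - dX l F2 p)" for l
    by (intro hom_diff hom_sum2 h2 hdX homF2 smF2)
  have h4: "homog A 2 (\<lambda>p. ginv F i l p * ((\<Sum>k\<in>UNIV. snd p $ k * dX k (dY l F2) p) - dX l F2 p))" for l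
    using hom_mult[OF homginv h3] by simp
  show ?thesis unfolding sprayG_eq by (intro hom_cmult hom_sum2 h4)
qed

lemma eulerG: "q \<in> A \<Longrightarrow> vd1 (sprayG F j) q = 2 * sprayG F j q"
  using euler[OF conicA homG] sm_diffat[OF openA smG] by blast

lemma hd1_spray: assumes q: "q \<in> A" shows "F q * hd1 F g q = spray_op F g q"
proof -
  have e: "sprayG F j q = (snd q $ 1 * dY 1 (sprayG F j) q + snd q $ 2 * dY 2 (sprayG F j) q) / 2" for j
    using eulerG[OF q, of j] by (simp add: vd1_def sum_2)
  show ?thesis
    unfolding hd1_def hdelta_def Gij_def ell_up_def spray_op_def spray_with_def sum_2 e
    using Fnz[OF q] by (simp add: field_simps)
qed

lemma sm_vd2: assumes V: "open V" "V \<subseteq> A" and f: "smooth_on V f" shows "smooth_on V (vd2 F eps m f)"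
  unfolding vd2_eq
  by (intro sm_mult[OF V(1)] sm_cmult[OF V(1)] sm_sum2[OF V(1)] sm_dY f
      sm_subset[OF V(2) smF] sm_subset[OF V(2) smmup])

lemma hom_vd2: assumes V: "conic V" "V \<subseteq> A" and h: "homog V r f" and f: "smooth_on V f"
  shows "homog V r (vd2 F eps m f)"
proof -
  have oV: "open V" using V(1) unfolding conic_def by blast
  have fd: "f differentiable_on V" using f unfolding smooth_on_def by (metis iter_pd.simps(1))
  have "homog V (r - 1) (dY i f)" for i using hom_deriv[OF V(1) h fd] by blast
  hence "homog V (0 + (r - 1)) (\<lambda>p. m_up F m i p * dY i f p)" for i
    by (intro hom_mult hom_subset[OF V(2) hommup])
  hence "homog V (r - 1) (\<lambda>p. m_up F m i p * dY i f p)" for i by simp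
  hence "homog V (1 + (r - 1)) (\<lambda>p. eps * F p * (\<Sum>i\<in>UNIV. m_up F m i p * dY i f p))"
    by (intro hom_mult hom_cmult hom_subset[OF V(2) homF] hom_sum2) (simp add: mult.assoc)
  thus ?thesis unfolding vd2_eq by (simp add: mult.assoc)
qed

end

locale fsu2 = fsu +
  fixes p :: pt and k :: 2
  assumes pA: "p \<in> A" and mk: "m k p \<noteq> 0"
begin

definition U where "U = {q \<in> A. m k q \<noteq> 0}"

lemma UA: "U \<subseteq> A" unfolding U_def by blast
lemma pU: "p \<in> U" unfolding U_def using pA mk by blast
lemma openU: "open U"
proof -
  have "open (m k -` (- {0}) \<inter> A)"
    using continuous_on_open_vimage[OF openA, THEN iffD1, OF contm] by blast
  moreover have "m k -` (- {0}) \<inter> A = U" unfolding U_def by auto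
  ultimately show ?thesis by simp
qed
lemma conicU: "conic U"
  unfolding conic_def
proof (intro conjI ballI allI impI)
  show "open U" by (rule openU)
  fix q assume q: "q \<in> U"
  thus "snd q \<noteq> 0" using conicA UA unfolding conic_def by blast
  fix c :: real assume c: "c > 0"
  have "(fst q, c *\<^sub>R snd q) \<in> A" using conicA UA q c unfolding conic_def by blast
  moreover have "m k (fst q, c *\<^sub>R snd q) = m k q" using homD[OF homm, of q c] q c UA by auto
  ultimately show "(fst q, c *\<^sub>R snd q) \<in> U" using q unfolding U_def by auto
qed

lemma smU: "smooth_on A f \<Longrightarrow> smooth_on U f" by (rule sm_subset[OF UA])
lemma homU: "homog A r f \<Longrightarrow> homog U r f" by (rule hom_subset[OF UA])

definition cart where "cart = (\<lambda>q. 1/4 * dY k (dY k (dY k F2)) q)"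
lemma cart_eq: "cartan F k k k q = cart q" unfolding cartan_def cart_def F2_def by simp

lemma I_eq: "q \<in> U \<Longrightarrow> I q = F q * cart q * (1 / m k q) * (1 / m k q) * (1 / m k q)"
proof -
  assume q: "q \<in> U"
  have "F q * cartan F k k k q = I q * m k q * m k q * m k q"
    using ms q UA unfolding main_scalar_def by blast
  moreover have "m k q \<noteq> 0" using q unfolding U_def by blast
  ultimately show ?thesis by (simp add: cart_eq field_simps)
qed

lemma smcart: "smooth_on A cart" unfolding cart_def by (intro sm_cmult[OF openA] sm_dY smF2)
lemma homcart: "homog A (-1) cart"
proof -
  have "homog A (2 - 1 - 1 - 1) (dY k (dY k (dY k F2)))" by (intro hdY sm_dY smF2 homF2)
  thus ?thesis unfolding cart_def by (intro hom_cmult) simp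
qed

lemma mkU: "q \<in> U \<Longrightarrow> m k q \<noteq> 0" unfolding U_def by blast

lemma smI: "smooth_on U I"
proof -
  have "smooth_on U (\<lambda>q. F q * cart q * (1 / m k q) * (1 / m k q) * (1 / m k q))"
    by (intro sm_mult[OF openU] smU smF smcart sm_inv[OF openU] smm mkU)
  thus ?thesis by (rule sm_cong[OF openU, rotated]) (simp add: I_eq)
qed

lemma homI: "homog U 0 I"
proof -
  have hi: "homog U (- 0) (\<lambda>q. 1 / m k q)" by (intro hom_inv homU homm)
  have "homog U (1 + (-1) + (-0) + (-0) + (-0)) (\<lambda>q. F q * cart q * (1 / m k q) * (1 / m k q) * (1 / m k q))"
    by (intro hom_mult hi homU homF homcart)
  hence "homog U 0 (\<lambda>q. F q * cart q * (1 / m k q) * (1 / m k q) * (1 / m k q))" by simp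
  thus ?thesis by (rule hom_cong[OF _ conicU]) (simp add: I_eq)
qed

abbreviation "d2 \<equiv> vd2 F eps m"
abbreviation "phi2 \<equiv> d2 phi"
abbreviation "rho \<equiv> rhoC F eps m I phi"

lemma smphi2: "smooth_on A phi2" by (rule sm_vd2[OF openA order_refl smphi])
lemma homphi2: "homog A 0 phi2" by (rule hom_vd2[OF conicA order_refl homphi smphi])
lemma smphi22: "smooth_on A (d2 phi2)" by (rule sm_vd2[OF openA order_refl smphi2])
lemma homphi22: "homog A 0 (d2 phi2)" by (rule hom_vd2[OF conicA order_refl homphi2 smphi2])

lemma sigma_eq: "sigmaC F eps m I phi = (\<lambda>q. d2 phi2 q + eps * I q * phi2 q + 2 * (phi2 q)\<^sup>2)"
  unfolding sigmaC_def by simp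
lemma rho_eq: "rho = (\<lambda>q. 1 / (sigmaC F eps m I phi q + eps - (phi2 q)\<^sup>2))"
  unfolding rhoC_def by simp

lemma smsigma: "smooth_on U (sigmaC F eps m I phi)"
  unfolding sigma_eq power2_eq_square
  by (intro sm_add[OF openU] sm_mult[OF openU] sm_const smU smphi2 smphi22 smI)
lemma homphi2sq: "homog U 0 (\<lambda>q. phi2 q * phi2 q)"
  using hom_mult[OF homU[OF homphi2] homU[OF homphi2]] by simp
lemma homsigma: "homog U 0 (sigmaC F eps m I phi)"
proof -
  have c: "homog U 0 (\<lambda>q. eps * I q * phi2 q)"
    using hom_mult[OF hom_cmult[OF homI] homU[OF homphi2]] by simp
  have "homog U 0 (\<lambda>q. d2 phi2 q + eps * I q * phi2 q + 2 * (phi2 q * phi2 q))"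
    by (rule hom_add[OF hom_add[OF homU[OF homphi22] c] hom_cmult[OF homphi2sq]])
  thus ?thesis unfolding sigma_eq power2_eq_square .
qed

lemma rho_nz: "q \<in> A \<Longrightarrow> rho q \<noteq> 0" using pos by force
lemma den_nz: "q \<in> A \<Longrightarrow> sigmaC F eps m I phi q + eps - (phi2 q)\<^sup>2 \<noteq> 0"
  using rho_nz unfolding rho_eq by fastforce

lemma smrho: "smooth_on U rho"
  unfolding rho_eq power2_eq_square
  by (intro sm_inv[OF openU] sm_diff[OF openU] sm_add[OF openU] sm_mult[OF openU] sm_const smsigma smU smphi2)
     (use den_nz UA in \<open>auto simp: power2_eq_square\<close>)
lemma homrho: "homog U 0 rho"
proof -
  have "homog U 0 (\<lambda>q. sigmaC F eps m I phi q + eps - phi2 q * phi2 q)"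
    using hom_diff[OF hom_add[OF homsigma hom_const] homphi2sq] .
  hence "homog U (- 0) (\<lambda>q. 1 / (sigmaC F eps m I phi q + eps - phi2 q * phi2 q))" by (rule hom_inv)
  thus ?thesis unfolding rho_eq power2_eq_square by simp
qed

lemma smrho2: "smooth_on U (d2 rho)" by (rule sm_vd2[OF openU UA smrho])
lemma homrho2: "homog U 0 (d2 rho)" by (rule hom_vd2[OF conicU UA homrho smrho])

lemma euler0: "homog U 0 f \<Longrightarrow> smooth_on U f \<Longrightarrow> vd1 f p = 0"
  using euler[OF conicU _ pU sm_diffat[OF openU _ pU]] by simp

lemma vd1_zero: "vd1 rho p = 0" "vd1 I p = 0" "vd1 phi2 p = 0" "vd1 (d2 rho) p = 0"
  by (rule euler0; (rule homrho homI homU[OF homphi2] homrho2 smrho smI smU[OF smphi2] smrho2))+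

end

lemma dd_cmul: "f differentiable (at p) \<Longrightarrow> dd v (\<lambda>q. c * f q) p = c * dd v f p"
  using dd_mult[of "\<lambda>q. c" p f v] by (simp add: dd_const)

lemma alg:
  fixes F e r s Iz a b Q rS IS aS bS IM aM bM :: real
  assumes e: "e = 1 \<or> e = -1" and s: "s > 0" "s^2 = e*r" and r: "r \<noteq> 0" and F: "F \<noteq> 0"
  defines "KK \<equiv> Iz + 2*e*a - e/2*(b/r)"
  shows "F * (e*rS/(2* s) * KK + s*(IS + 2*e*aS - e/2*((bS*r - b*rS)/r^2)))
     - 2*e*Q*(e*b/(2* s) * KK + s*(IM + 2*e*aM - e/2*((bM*r - b*b)/r^2)))
   = F* s*IS + s/(2*r) * ((F^2*(rS/F) - 2*e*Q*b)*(Iz + 2*e*a + e*b/(2*r))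
       + F^2*(4*e*r*(aS/F) - e*(bS/F)) - 2*Q*(2*e*r*IM + 4*r*aM - bM))"
proof -
  have ee: "e*e = 1" using e by auto
  have se: "e / s = s / r" using s r ee by (simp add: field_simps power2_eq_square)
  have se2: "e*rS/(2* s) = rS* s/(2*r)" "e*b/(2* s) = b* s/(2*r)" using se
    by (metis times_divide_eq_right mult.commute divide_divide_eq_left)+
  show ?thesis unfolding KK_def se2 using e r F
    by (elim disjE; simp; simp add: field_simps power2_eq_square; simp add: algebra_simps)
qed

lemma alg2:
  fixes F e r s Iz a b Q rS IS aS bS IM aM bM :: real
  assumes e: "e = 1 \<or> e = -1" and s: "s > 0" "s^2 = e*r" and r: "r \<noteq> 0" and F: "F \<noteq> 0"
  defines "KK \<equiv> Iz + 2*e*a - e/2*(b*(1/r))"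
  shows "F * (inverse s / 2 * (e * rS) * KK + s * (IS + 2*e*aS - e/2 * (bS * (1/r) + b * ((-1) * rS * (1/r) * (1/r)))))
     - 2*e*Q*(inverse s / 2 * (e * b) * KK + s * (IM + 2*e*aM - e/2 * (bM * (1/r) + b * ((-1) * b * (1/r) * (1/r)))))
   = F* s*IS + s/(2*r) * ((F^2*(rS/F) - 2*e*Q*b)*(Iz + 2*e*a + e*b/(2*r))
       + F^2*(4*e*r*(aS/F) - e*(bS/F)) - 2*Q*(2*e*r*IM + 4*r*aM - bM))"
proof -
  have 1: "inverse s / 2 * (e * x) = e*x/(2* s)" for x by (simp add: field_simps)
  have 2: "y * (1/r) + b * ((-1) * x * (1/r) * (1/r)) = (y*r - b*x)/r^2" for x y
    using r by (simp add: field_simps power2_eq_square)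
  have 3: "b*(1/r) = b/r" by simp
  show ?thesis unfolding KK_def 1 2 3 by (rule alg[OF e s r F])
qed

context fsu2 begin

abbreviation "Ibar \<equiv> IbarC F eps m I phi"
definition Ib' where "Ib' = (\<lambda>q. sqrt (eps * rho q) * (I q + 2*eps*phi2 q - eps/2 * (d2 rho q * (1 / rho q))))"

lemma diffU: "smooth_on U f \<Longrightarrow> f differentiable (at q) \<Longrightarrow> True" by simp

lemma dln: assumes q: "q \<in> U" shows "d2 (\<lambda>q. ln \<bar>rho q\<bar>) q = d2 rho q * (1 / rho q)"
proof -
  have rd: "rho differentiable (at q)" by (rule sm_diffat[OF openU smrho q])
  have rnz: "rho q \<noteq> 0" using rho_nz q UA by blast
  have "dY i (\<lambda>q. ln \<bar>rho q\<bar>) q = 1 / rho q * dY i rho q" for i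
    unfolding dY_dd by (rule dd_chain[OF rd deriv_ln_abs[OF rnz]])
  thus ?thesis unfolding vd2_def sum_2 by (simp add: algebra_simps)
qed

lemma Ibar_eq: "q \<in> U \<Longrightarrow> Ibar q = Ib' q"
  unfolding IbarC_def Ib'_def by (simp add: dln)

lemma diffs: "rho differentiable (at p)" "I differentiable (at p)" "phi2 differentiable (at p)"
    "d2 rho differentiable (at p)"
  by (rule sm_diffat[OF openU _ pU]; rule smrho smI smU[OF smphi2] smrho2)+

lemma posp: "eps * rho p > 0" using pos pA by blast

lemma dsqrt: "dd v (\<lambda>q. sqrt (eps * rho q)) p = inverse (sqrt (eps * rho p)) / 2 * (eps * dd v rho p)"
  and diff_sqrt: "(\<lambda>q. sqrt (eps * rho q)) differentiable (at p)"
proof -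
  have d: "(\<lambda>q. eps * rho q) differentiable (at p)" using diffs(1) by (simp add: differentiable_mult)
  show "dd v (\<lambda>q. sqrt (eps * rho q)) p = inverse (sqrt (eps * rho p)) / 2 * (eps * dd v rho p)"
    using dd_chain[OF d DERIV_real_sqrt[OF posp]] dd_cmul[OF diffs(1)] by simp
  show "(\<lambda>q. sqrt (eps * rho q)) differentiable (at p)"
    by (rule diff_chain[OF d DERIV_real_sqrt[OF posp]])
qed

definition Kp where "Kp = I p + 2*eps*phi2 p - eps/2 * (d2 rho p * (1 / rho p))"

lemma rhop_nz: "rho p \<noteq> 0" using rho_nz pA by blast

lemma dIb: "dd v Ib' p = inverse (sqrt (eps * rho p)) / 2 * (eps * dd v rho p) * Kp
   + sqrt (eps * rho p) * (dd v I p + 2*eps*dd v phi2 p - eps/2 * (dd v (d2 rho) p * (1 / rho p)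
      + d2 rho p * ((-1) * dd v rho p * (1 / rho p) * (1 / rho p))))"
  and diffIb: "Ib' differentiable (at p)"
proof -
  have dinv: "(\<lambda>q. 1 / rho q) differentiable (at p)" by (rule diff_inv[OF diffs(1) rhop_nz])
  have dq: "(\<lambda>q. d2 rho q * (1 / rho q)) differentiable (at p)"
    using diffs(4) dinv by (rule differentiable_mult)
  have ddq: "dd v (\<lambda>q. d2 rho q * (1 / rho q)) p = dd v (d2 rho) p * (1 / rho p)
      + d2 rho p * ((-1) * dd v rho p * (1 / rho p) * (1 / rho p))"
    using dd_mult[OF diffs(4) dinv] dd_inv[OF diffs(1) rhop_nz] by simp
  have d2p: "(\<lambda>q. 2*eps*phi2 q) differentiable (at p)" by (rule differentiable_mult[OF differentiable_const diffs(3)])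
  have dKq: "(\<lambda>q. eps/2 * (d2 rho q * (1 / rho q))) differentiable (at p)" by (rule differentiable_mult[OF differentiable_const dq])
  have dK1: "(\<lambda>q. I q + 2*eps*phi2 q) differentiable (at p)" using diffs(2) d2p by (rule differentiable_add)
  have dK: "(\<lambda>q. I q + 2*eps*phi2 q - eps/2 * (d2 rho q * (1 / rho q))) differentiable (at p)"
    using dK1 dKq by (rule differentiable_diff)
  have ddK: "dd v (\<lambda>q. I q + 2*eps*phi2 q - eps/2 * (d2 rho q * (1 / rho q))) p
     = dd v I p + 2*eps*dd v phi2 p - eps/2 * (dd v (d2 rho) p * (1 / rho p)
      + d2 rho p * ((-1) * dd v rho p * (1 / rho p) * (1 / rho p)))"
    using dd_diff[OF dK1 dKq, of v] dd_add[OF diffs(2) d2p, of v] dd_cmul[OF diffs(3), of v "2*eps"]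
      dd_cmul[OF dq, of v "eps/2"] ddq by simp
  show "dd v Ib' p = inverse (sqrt (eps * rho p)) / 2 * (eps * dd v rho p) * Kp
   + sqrt (eps * rho p) * (dd v I p + 2*eps*dd v phi2 p - eps/2 * (dd v (d2 rho) p * (1 / rho p)
      + d2 rho p * ((-1) * dd v rho p * (1 / rho p) * (1 / rho p))))"
    unfolding Ib'_def using dd_mult[OF diff_sqrt dK, of v] dsqrt ddK by (simp add: Kp_def)
  show "Ib' differentiable (at p)" unfolding Ib'_def using diff_sqrt dK by (rule differentiable_mult)
qed

end

context fsu2 begin

definition vS :: pt where "vS = (\<chi> i. snd p $ i, \<chi> i. -2 * sprayG F i p)"
definition vM :: pt where "vM = (\<chi> i. 0, \<chi> i. eps * F p * m_up F m i p)"

lemma S_dd: assumes g: "g differentiable (at p)" shows "spray_op F g p = dd vS g p"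
proof -
  have "spray_op F g p = (\<Sum>i\<in>UNIV. snd p $ i * dX i g p) + (\<Sum>i\<in>UNIV. (-2 * sprayG F i p) * dY i g p)"
    unfolding spray_op_def spray_with_def sum_2 by (simp add: algebra_simps)
  also have "\<dots> = dd (\<chi> i. snd p $ i, \<chi> i. -2 * sprayG F i p) g p" by (rule op_dd[OF g])
  finally show ?thesis unfolding vS_def .
qed

lemma M_dd: assumes g: "g differentiable (at p)" shows "d2 g p = dd vM g p"
proof -
  have "d2 g p = (\<Sum>i\<in>UNIV. 0 * dX i g p) + (\<Sum>i\<in>UNIV. (eps * F p * m_up F m i p) * dY i g p)"
    unfolding vd2_def sum_2 by (simp add: algebra_simps)
  also have "\<dots> = dd (\<chi> i. 0, \<chi> i. eps * F p * m_up F m i p) g p" by (rule op_dd[OF g])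
  finally show ?thesis unfolding vM_def .
qed

lemma Jbar_decomp: "F p * spray_with (GbarC F eps m I phi) f p = F p * spray_op F f p
   - 2 * eps * QC F eps m I phi p * d2 f p - 2 * PC F eps m I phi p * vd1 f p"
proof -
  have Fp: "F p \<noteq> 0" using Fnz[OF pA] .
  show ?thesis
    unfolding spray_with_def spray_op_def GbarC_def vd2_def vd1_def ell_up_def sum_2
    using eps1 Fp by (elim disjE) (simp_all add: field_simps)
qed

lemma diffIbar: "Ibar differentiable (at p)"
  by (rule diff_local[OF openU pU _ diffIb]) (simp add: Ibar_eq)
lemma ddIbar: "dd v Ibar p = dd v Ib' p"
  by (rule dd_local[OF openU pU]) (simp add: Ibar_eq)

lemma vd1Ibar: "vd1 Ibar p = 0"
proof -
  have z: "dd (0, snd p) rho p = 0" "dd (0, snd p) I p = 0" "dd (0, snd p) phi2 p = 0" "dd (0, snd p) (d2 rho) p = 0"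
    using vd1_zero vd1_dd[OF diffs(1)] vd1_dd[OF diffs(2)] vd1_dd[OF diffs(3)] vd1_dd[OF diffs(4)] by simp_all
  show ?thesis unfolding vd1_dd[OF diffIbar] ddIbar dIb z by simp
qed

lemma hS: "hd1 F g p = spray_op F g p / F p"
  using hd1_spray[OF pA, of g] Fnz[OF pA] by (simp add: field_simps)

lemma main_at_p:
  "F p * spray_with (GbarC F eps m I phi) Ibar p =
        F p * sqrt (eps * rho p) * spray_op F I p
        + sqrt (eps * rho p) / (2 * rho p) *
          ( ((F p)\<^sup>2 * hd1 F rho p - 2 * eps * QC F eps m I phi p * d2 rho p)
              * (I p + 2 * eps * d2 phi p + eps * d2 rho p / (2 * rho p))
            + (F p)\<^sup>2 * (4 * eps * rho p * hd1 F (d2 phi) p - eps * hd1 F (d2 rho) p)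
            - 2 * QC F eps m I phi p * (2 * eps * rho p * d2 I p + 4 * rho p * d2 (d2 phi) p - d2 (d2 rho) p))"
proof -
  define Q where "Q = QC F eps m I phi p"
  define s where "s = sqrt (eps * rho p)"
  have spos: "s > 0" unfolding s_def using posp by simp
  have ssq: "s^2 = eps * rho p" unfolding s_def using posp by simp
  note A2 = alg2[OF eps1 spos ssq rhop_nz Fnz[OF pA], where Iz = "I p" and a = "phi2 p" and b = "d2 rho p"
     and Q = Q and rS = "dd vS rho p" and IS = "dd vS I p" and aS = "dd vS phi2 p" and bS = "dd vS (d2 rho) p"
     and IM = "d2 I p" and aM = "d2 phi2 p" and bM = "d2 (d2 rho) p"]
  have mv: "dd vM rho p = d2 rho p" "dd vM I p = d2 I p" "dd vM phi2 p = d2 phi2 p" "dd vM (d2 rho) p = d2 (d2 rho) p"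
    using M_dd[OF diffs(1)] M_dd[OF diffs(2)] M_dd[OF diffs(3)] M_dd[OF diffs(4)] by simp_all
  have L: "F p * spray_with (GbarC F eps m I phi) Ibar p =
     F p * (inverse s / 2 * (eps * dd vS rho p) * Kp + s * (dd vS I p + 2*eps*dd vS phi2 p - eps/2 * (dd vS (d2 rho) p * (1/rho p) + d2 rho p * ((-1) * dd vS rho p * (1/rho p) * (1/rho p)))))
     - 2*eps*Q*(inverse s / 2 * (eps * d2 rho p) * Kp + s * (d2 I p + 2*eps*d2 phi2 p - eps/2 * (d2 (d2 rho) p * (1/rho p) + d2 rho p * ((-1) * d2 rho p * (1/rho p) * (1/rho p)))))"
    unfolding Jbar_decomp vd1Ibar S_dd[OF diffIbar] M_dd[OF diffIbar] ddIbar dIb mv Q_def s_def by simp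
  have R: "hd1 F rho p = dd vS rho p / F p" "hd1 F phi2 p = dd vS phi2 p / F p"
     "hd1 F (d2 rho) p = dd vS (d2 rho) p / F p" "spray_op F I p = dd vS I p"
    unfolding hS using S_dd[OF diffs(1)] S_dd[OF diffs(2)] S_dd[OF diffs(3)] S_dd[OF diffs(4)] by simp_all
  show ?thesis unfolding L R Q_def[symmetric] s_def[symmetric] Kp_def using A2 by simp
qed

end

theorem proposition4p3:
  fixes A :: "pt set" and F phi I :: "pt \<Rightarrow> real" and eps :: real
    and m :: "2 \<Rightarrow> pt \<Rightarrow> real"
  assumes "conic_pseudo_finsler A F"
    and "berwald_frame A F eps m"
    and "main_scalar A F m I"
    and "admissible_phi A F eps m phi"
    and "\<forall>p\<in>A. eps * rhoC F eps m I phi p > 0"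
  shows "\<forall>p\<in>A.
    (let \<rho> = rhoC F eps m I phi; Q = QC F eps m I phi p;
         d2 = vd2 F eps m; J = spray_op F I;
         Jbar = spray_with (GbarC F eps m I phi) (IbarC F eps m I phi)
     in F p * Jbar p =
        F p * sqrt (eps * \<rho> p) * J p
        + sqrt (eps * \<rho> p) / (2 * \<rho> p) *
          ( ((F p)\<^sup>2 * hd1 F \<rho> p - 2 * eps * Q * d2 \<rho> p)
              * (I p + 2 * eps * d2 phi p + eps * d2 \<rho> p / (2 * \<rho> p))
            + (F p)\<^sup>2 * (4 * eps * \<rho> p * hd1 F (d2 phi) p - eps * hd1 F (d2 \<rho>) p)
            - 2 * Q * (2 * eps * \<rho> p * d2 I p + 4 * \<rho> p * d2 (d2 phi) p - d2 (d2 \<rho>) p)))"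
proof
  fix p assume pA: "p \<in> A"
  interpret fsu A F phi I eps m using assms by (unfold_locales) auto
  obtain k where k: "m k p \<noteq> 0" using m_nonzero[OF pA] by blast
  interpret fsu2 A F phi I eps m p k by unfold_locales (use pA k in auto)
  show "let \<rho> = rhoC F eps m I phi; Q = QC F eps m I phi p;
         d2 = vd2 F eps m; J = spray_op F I;
         Jbar = spray_with (GbarC F eps m I phi) (IbarC F eps m I phi)
     in F p * Jbar p =
        F p * sqrt (eps * \<rho> p) * J p
        + sqrt (eps * \<rho> p) / (2 * \<rho> p) *
          ( ((F p)\<^sup>2 * hd1 F \<rho> p - 2 * eps * Q * d2 \<rho> p)
              * (I p + 2 * eps * d2 phi p + eps * d2 \<rho> p / (2 * \<rho> p))
            + (F p)\<^sup>2 * (4 * eps * \<rho> p * hd1 F (d2 phi) p - eps * hd1 F (d2 \<rho>) p)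
            - 2 * Q * (2 * eps * \<rho> p * d2 I p + 4 * \<rho> p * d2 (d2 phi) p - d2 (d2 \<rho>) p))"
    unfolding Let_def by (rule main_at_p)
qed

end
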